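(* Let $\overline{\mathcal R}_{Moon}$ be the function obtained from the lunar disturbing function expansion $$\mathcal R_k=\sum_{l\ge 2}\sum_{m,p,s,q=0}^{l}\sum_{j,r\in\mathbb Z}(-1)^{m+s}(-1)^{[m/2]}\frac{\mathcal G m_k\,\epsilon_m\epsilon_s}{2a_k}\frac{(l-s)!}{(l+m)!}\left(\frac{a}{a_k}\right)^{l}F_{lmp}(I)F_{lsq}(I_k)H_{lpj}(e)G_{lqr}(e_k)$$ $$\times\Big\{(-1)^{k_2}U_l^{m,-s}\cos\big(\bar\theta_{lmpj}+\bar\theta'_{lsqr}-y_s\pi\big)+(-1)^{k_3}U_l^{m,s}\cos\big(\bar\theta_{lmpj}-\bar\theta'_{lsqr}-y_s\pi\big)\Big\}$$ by keeping only the terms with $l=2$ and averaging over the mean anomalies $M$ of the point mass and $M_k$ of the Moon (i.e. keeping only the terms with $l-2p+j=0$ and $l-2q+r=0$). Let $\overline{\mathcal R}_{Sun}$ be obtained in the same way from the solar expansion $$\mathcal R^{*}=\mathcal G m^{*}\sum_{l\ge 2}\sum_{m=0}^{l}\sum_{p=0}^{l}\sum_{h=0}^{l}\sum_{q,j\in\mathbb Z}\frac{a^{l}}{(a^{*})^{l+1}}\epsilon_m\frac{(l-m)!}{(l+m)!}F_{lmp}(I)F_{lmh}(I^{*})H_{lpq}(e)G_{lhj}(e^{*})\cos\varphi_{lmphqj},$$ $$\varphi_{lmphqj}=(l-2p)\omega+(l-2p+q)M-(l-2h)\omega^{*}-(l-2h+j)M^{*}+m(\Omega-\Omega^{*}),$$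 by keeping only the terms with $l=2$ and averaging over $M$ and $M^{*}$ (i.e. keeping only terms with $l-2p+q=0$ and $l-2h+j=0$). Then $\overline{\mathcal R}_{Moon}$ does not depend on the argument of perigee $\omega_k$ of the Moon, and $\overline{\mathcal R}_{Sun}$ does not depend on the argument of perigee $\omega^{*}$ of the Sun.
   Context: $a,e,I,\omega,\Omega,M$ are the orbital elements (semi-major axis, eccentricity, inclination, argument of perigee, longitude of ascending node, mean anomaly) of an Earth-orbiting point mass referred to the celestial equator; $a_k,e_k,I_k,\omega_k,\Omega_k,M_k$ are the Moon's elements referred to the ecliptic, $m_k$ its mass; $a^*,e^*,I^*,\omega^*,\Omega^*,M^*$ are the Sun's elements referred to the celestial equator, $m^*$ its mass; $\mathcal G$ is the gravitational constant; $\varepsilon$ is the obliquity of the ecliptic. $\epsilon_m=1$ if $m=0$, $\epsilon_m=2$ otherwise. $\bar\theta_{lmpj}=(l-2p)\omega+(l-2p+j)M+m\Omega$, $\bar\theta'_{lsqr}=(l-2q)\omega_k+(l-2q+r)M_k+s(\Omega_k-\pi/2)$; $y_s=0$ for $s$ even, $1/2$ for $s$ odd; $t=(l-1)\bmod 2$, $k_2=t(m+s-1)+1$, $k_3=t(m+s)$; $U_l^{m,s}=\sum_{r=\max(0,-(m+s))}^{\min(l-s,l-m)}(-1)^{l-m-r}\binom{l+m}{m+s+r}\binom{l-m}{r}\cos^{m+s+2r}(\varepsilon/2)\sin^{-m-s+2(l-r)}(\varepsilon/2)$. Hansen coefficients $X_k^{n,m}(e)$ are defined by $(r/a)^n e^{imf}=\sum_{k\in\mathbb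 Z}X_k^{n,m}(e)e^{ikM}$ ($f$ true anomaly); $H_{lpj}(e)=X^{l,l-2p}_{l-2p+j}(e)$, $G_{lqr}(e')=X^{-(l+1),l-2q}_{l-2q+r}(e')$. $F_{lmp}(I)$ is Kaula's inclination function $F_{lmp}(I)=\sum_{t=0}^{\min\{p,[\frac{l-m}{2}]\}}\frac{(2l-2t)!}{t!(l-t)!(l-m-2t)!2^{2l-2t}}\sin^{l-m-2t}I\sum_{s=0}^{m}\binom{m}{s}\cos^{s}I\sum_{c}\binom{l-m-2t+s}{c}\binom{m-s}{p-t-c}(-1)^{c-[\frac{l-m}{2}]}$, with $[\cdot]$ the integer part and $c$ over all values making the binomials nonzero. *)

theory Defs
  imports "HOL-Analysis.Analysis"
begin

record elements =
  sm_axis :: real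
  ecc :: real
  incl :: real
  arg_per :: real
  long_node :: real
  mean_anom :: real

definition kepler_E :: "real \<Rightarrow> real \<Rightarrow> real" where
  "kepler_E e M = (THE E. E - e * sin E = M)"

definition r_over_a :: "real \<Rightarrow> real \<Rightarrow> real" where
  "r_over_a e M = 1 - e * cos (kepler_E e M)"

definition true_anom :: "real \<Rightarrow> real \<Rightarrow> real" where
  "true_anom e M = Arg (Complex (cos (kepler_E e M) - e)
                                (sqrt (1 - e\<^sup>2) * sin (kepler_E e M)))"

text \<open>Hansen coefficient X_k^{n,m}(e): the k-th Fourier coefficient (in M) of
  (r/a)^n e^{imf}. The coefficients are real; we take the real part.\<close>
definition hansen :: "int \<Rightarrow> int \<Rightarrow> int \<Rightarrow> real \<Rightarrow> real" where
  "hansen n m k e = Re ((1 / (2 * pi)) * integral {0..2 * pi}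
      (\<lambda>M. complex_of_real (r_over_a e M powi n) * cis (of_int m * true_anom e M)
            * cis (- (of_int k * M))))"

definition H_fun :: "nat \<Rightarrow> nat \<Rightarrow> int \<Rightarrow> real \<Rightarrow> real" where
  "H_fun l p j e = hansen (int l) (int l - 2 * int p) (int l - 2 * int p + j) e"

definition G_fun :: "nat \<Rightarrow> nat \<Rightarrow> int \<Rightarrow> real \<Rightarrow> real" where
  "G_fun l q r e = hansen (- (int l + 1)) (int l - 2 * int q) (int l - 2 * int q + r) e"

definition kaula_F :: "nat \<Rightarrow> nat \<Rightarrow> nat \<Rightarrow> real \<Rightarrow> real" where
  "kaula_F l m p I =
    (\<Sum>t = 0..min p ((l - m) div 2).
       fact (2 * l - 2 * t) / (fact t * fact (l - t) * fact (l - m - 2 * t) * 2 ^ (2 * l - 2 * t))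
       * sin I ^ (l - m - 2 * t)
       * (\<Sum>s = 0..m. real (m choose s) * cos I ^ s
           * (\<Sum>c = 0..p - t. real ((l - m - 2 * t + s) choose c)
                * real ((m - s) choose (p - t - c))
                * (-1) powi (int c - int ((l - m) div 2)))))"

definition U_coef :: "nat \<Rightarrow> int \<Rightarrow> int \<Rightarrow> real \<Rightarrow> real" where
  "U_coef l m s \<epsilon> =
    (\<Sum>r = max 0 (- (m + s)) .. min (int l - s) (int l - m).
       (-1) powi (int l - m - r)
       * real (nat (int l + m) choose nat (m + s + r))
       * real (nat (int l - m) choose nat r)
       * cos (\<epsilon> / 2) ^ nat (m + s + 2 * r)
       * sin (\<epsilon> / 2) ^ nat (- m - s + 2 * (int l - r)))"

definition eps_idx :: "nat \<Rightarrow> real" where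
  "eps_idx m = (if m = 0 then 1 else 2)"

definition y_idx :: "nat \<Rightarrow> real" where
  "y_idx s = (if even s then 0 else 1 / 2)"

definition t_idx :: "nat \<Rightarrow> int" where
  "t_idx l = (int l - 1) mod 2"

definition k2_idx :: "nat \<Rightarrow> nat \<Rightarrow> nat \<Rightarrow> int" where
  "k2_idx l m s = t_idx l * (int m + int s - 1) + 1"

definition k3_idx :: "nat \<Rightarrow> nat \<Rightarrow> nat \<Rightarrow> int" where
  "k3_idx l m s = t_idx l * (int m + int s)"

definition theta_bar :: "elements \<Rightarrow> nat \<Rightarrow> nat \<Rightarrow> nat \<Rightarrow> int \<Rightarrow> real" where
  "theta_bar x l m p j = of_int (int l - 2 * int p) * arg_per x
     + of_int (int l - 2 * int p + j) * mean_anom x + real m * long_node x"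

definition theta'_bar :: "elements \<Rightarrow> nat \<Rightarrow> nat \<Rightarrow> nat \<Rightarrow> int \<Rightarrow> real" where
  "theta'_bar k l s q r = of_int (int l - 2 * int q) * arg_per k
     + of_int (int l - 2 * int q + r) * mean_anom k + real s * (long_node k - pi / 2)"

text \<open>General term of the lunar disturbing function.
  Arguments: G, Moon mass, obliquity, satellite elements, Moon elements, indices.\<close>
definition moon_term :: "real \<Rightarrow> real \<Rightarrow> real \<Rightarrow> elements \<Rightarrow> elements
    \<Rightarrow> nat \<Rightarrow> nat \<Rightarrow> nat \<Rightarrow> nat \<Rightarrow> nat \<Rightarrow> int \<Rightarrow> int \<Rightarrow> real" where
  "moon_term G mk \<epsilon> x k l m p s q j r =
     (-1) ^ (m + s) * (-1) ^ (m div 2)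
     * (G * mk * eps_idx m * eps_idx s / (2 * sm_axis k))
     * (fact (l - s) / fact (l + m)) * (sm_axis x / sm_axis k) ^ l
     * kaula_F l m p (incl x) * kaula_F l s q (incl k)
     * H_fun l p j (ecc x) * G_fun l q r (ecc k)
     * ((-1) powi k2_idx l m s * U_coef l (int m) (- int s) \<epsilon>
          * cos (theta_bar x l m p j + theta'_bar k l s q r - y_idx s * pi)
        + (-1) powi k3_idx l m s * U_coef l (int m) (int s) \<epsilon>
          * cos (theta_bar x l m p j - theta'_bar k l s q r - y_idx s * pi))"

text \<open>Averaged degree-2 lunar part: l = 2, l-2p+j = 0, l-2q+r = 0.\<close>
definition R_moon_bar :: "real \<Rightarrow> real \<Rightarrow> real \<Rightarrow> elements \<Rightarrow> elements \<Rightarrow> real" where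
  "R_moon_bar G mk \<epsilon> x k =
     (\<Sum>m\<in>{0..2}. \<Sum>p\<in>{0..2}. \<Sum>s\<in>{0..2}. \<Sum>q\<in>{0..2}.
        moon_term G mk \<epsilon> x k 2 m p s q (2 * int p - 2) (2 * int q - 2))"

definition phi_sun :: "elements \<Rightarrow> elements \<Rightarrow> nat \<Rightarrow> nat \<Rightarrow> nat \<Rightarrow> nat \<Rightarrow> int \<Rightarrow> int \<Rightarrow> real" where
  "phi_sun x S l m p h q j =
     of_int (int l - 2 * int p) * arg_per x + of_int (int l - 2 * int p + q) * mean_anom x
     - of_int (int l - 2 * int h) * arg_per S - of_int (int l - 2 * int h + j) * mean_anom S
     + real m * (long_node x - long_node S)"

definition sun_term :: "real \<Rightarrow> real \<Rightarrow> elements \<Rightarrow> elements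
    \<Rightarrow> nat \<Rightarrow> nat \<Rightarrow> nat \<Rightarrow> nat \<Rightarrow> int \<Rightarrow> int \<Rightarrow> real" where
  "sun_term G ms x S l m p h q j =
     G * ms * (sm_axis x ^ l / sm_axis S ^ (l + 1)) * eps_idx m
     * (fact (l - m) / fact (l + m))
     * kaula_F l m p (incl x) * kaula_F l m h (incl S)
     * H_fun l p q (ecc x) * G_fun l h j (ecc S)
     * cos (phi_sun x S l m p h q j)"

text \<open>Averaged degree-2 solar part: l = 2, l-2p+q = 0, l-2h+j = 0.\<close>
definition R_sun_bar :: "real \<Rightarrow> real \<Rightarrow> elements \<Rightarrow> elements \<Rightarrow> real" where
  "R_sun_bar G ms x S =
     (\<Sum>m\<in>{0..2}. \<Sum>p\<in>{0..2}. \<Sum>h\<in>{0..2}.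
        sun_term G ms x S 2 m p h (2 * int p - 2) (2 * int h - 2))"

end

theory Submission
  imports Defs
begin

definition gK :: "real \<Rightarrow> real \<Rightarrow> real" where "gK e E = E - e * sin E"

lemma gK_deriv: "(gK e has_real_derivative (1 - e * cos E)) (at E within S)"
  unfolding gK_def by (auto intro!: derivative_eq_intros)

lemma D_pos: assumes "0 \<le> (e::real)" "e < 1" shows "0 < 1 - e * cos E"
proof -
  have "e * cos E \<le> e * 1" by (rule mult_left_mono) (use assms in auto)
  then show ?thesis using assms by simp
qed

lemma gK_strict: assumes "0 \<le> (e::real)" "e < 1" "a < b" shows "gK e a < gK e b"
  using assms(3)
proof (rule DERIV_pos_imp_increasing)
  fix x assume "a \<le> x" "x \<le> b"
  show "\<exists>y. DERIV (gK e) x :> y \<and> 0 < y"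
    using gK_deriv[of e x UNIV] D_pos[OF assms(1,2)] by blast
qed

lemma gK_cont: "continuous_on S (gK e)"
  unfolding gK_def by (intro continuous_intros)

lemma gK_ex: assumes "0 \<le> (e::real)" "e < 1" shows "\<exists>E. gK e E = M"
proof -
  have "gK e (M - 1) \<le> M" using assms abs_sin_le_one[of "M-1"]
    unfolding gK_def by (smt (verit) mult_left_le_one_le abs_le_iff mult_minus_right abs_mult abs_of_nonneg)
  moreover have "M \<le> gK e (M + 1)" using assms abs_sin_le_one[of "M+1"]
    unfolding gK_def by (smt (verit) mult_left_le_one_le abs_le_iff mult_minus_right abs_mult abs_of_nonneg)
  ultimately show ?thesis using IVT'[of "gK e" "M - 1" M "M + 1"] gK_cont by force
qed

lemma gK_inj: assumes "0 \<le> (e::real)" "e < 1" "gK e a = gK e b" shows "a = b"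
  using gK_strict[OF assms(1,2), of a b] gK_strict[OF assms(1,2), of b a] assms(3)
  by (cases a b rule: linorder_cases) auto

lemma kepler: assumes "0 \<le> (e::real)" "e < 1" shows "gK e (kepler_E e M) = M"
proof -
  have "\<exists>!E. E - e * sin E = M" using gK_ex[OF assms] gK_inj[OF assms] unfolding gK_def by metis
  then show ?thesis unfolding kepler_E_def gK_def by (rule theI')
qed

lemma kepler_inv: assumes "0 \<le> (e::real)" "e < 1" shows "kepler_E e (gK e E) = E"
  using kepler[OF assms, of "gK e E"] gK_inj[OF assms] by metis

lemma kepler_cont: assumes "0 \<le> (e::real)" "e < 1" shows "continuous_on {0..2*pi} (kepler_E e)"
proof -
  have c: "continuous_on (gK e ` {-1..2*pi+1}) (kepler_E e)"
    by (rule continuous_on_inv[OF gK_cont]) (use kepler_inv[OF assms] in auto)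
  have "{0..2*pi} \<subseteq> gK e ` {-1..2*pi+1}"
  proof
    fix M assume M: "M \<in> {0..2*pi}"
    define E where "E = kepler_E e M"
    have "gK e E = M" using kepler[OF assms] E_def by simp
    moreover have "\<bar>e * sin E\<bar> \<le> e" using assms abs_sin_le_one[of E]
      by (simp add: abs_mult mult_right_le_one_le)
    ultimately have "E \<in> {-1..2*pi+1}" using M assms unfolding gK_def by auto
    then show "M \<in> gK e ` {-1..2*pi+1}" using \<open>gK e E = M\<close> by blast
  qed
  then show ?thesis using c continuous_on_subset by blast
qed

definition hK :: "real \<Rightarrow> real \<Rightarrow> real" where
  "hK e E = (2 * (cos E - e)^2 / (1 - e * cos E)^2 - 1) / (1 - e * cos E)^3"

definition AK :: "real \<Rightarrow> real \<Rightarrow> real" where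
  "AK e E = sin E * cos E / (1 - e * cos E)^2 - 2 * e / 3 * sin E ^ 3 / (1 - e * cos E)^3"

lemma AK_deriv: assumes "0 \<le> (e::real)" "e < 1"
  shows "(AK e has_real_derivative ((1 - e * cos E) * hK e E)) (at E within S)"
proof -
  have D: "1 - e * cos E \<noteq> 0" using D_pos[OF assms, of E] by simp
  have sc: "sin E ^ 2 + cos E ^ 2 = 1" by simp
  show ?thesis
    unfolding AK_def
    apply (rule DERIV_cong)
     apply (rule derivative_eq_intros refl | use D in force)+
    using D apply (simp add: hK_def field_simps)
    using sc by algebra qed

lemma hK_cont: assumes "0 \<le> (e::real)" "e < 1" shows "continuous_on S (hK e)"
  unfolding hK_def using D_pos[OF assms]
  by (intro continuous_intros) (auto simp: less_imp_neq[symmetric] dest: sym)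

lemma AK_int: assumes "0 \<le> (e::real)" "e < 1"
  shows "((\<lambda>E. (1 - e * cos E) * hK e E) has_integral 0) {0..2*pi}"
proof -
  have "((\<lambda>E. (1 - e * cos E) * hK e E) has_integral (AK e (2*pi) - AK e 0)) {0..2*pi}"
    by (rule fundamental_theorem_of_calculus)
       (auto simp: has_real_derivative_iff_has_vector_derivative[symmetric] intro!: AK_deriv[OF assms])
  moreover have "AK e (2*pi) = 0" "AK e 0 = 0" by (simp_all add: AK_def)
  ultimately show ?thesis by simp
qed

lemma hKK_int: assumes "0 \<le> (e::real)" "e < 1"
  shows "((hK e \<circ> kepler_E e) has_integral 0) {0..2*pi}"
proof -
  have g0: "gK e 0 = 0" and g2: "gK e (2*pi) = 2*pi" by (simp_all add: gK_def)
  have mono: "gK e a \<le> gK e b" if "a \<le> b" for a b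
    using gK_strict[OF assms, of a b] that by (cases "a = b") auto
  have img: "gK e ` {0..2*pi} \<subseteq> {0..2*pi}"
    using mono g0 g2 by (auto, metis, metis)
  have cont: "continuous_on {0..2*pi} (hK e \<circ> kepler_E e)"
    by (rule continuous_on_compose[OF kepler_cont[OF assms] hK_cont[OF assms]])
  have "((\<lambda>E. (1 - e * cos E) *\<^sub>R (hK e \<circ> kepler_E e) (gK e E)) has_integral
        integral {gK e 0..gK e (2*pi)} (hK e \<circ> kepler_E e)) {0..2*pi}"
    by (rule has_integral_substitution[OF _ _ img cont]) (auto simp: g0 g2 gK_deriv)
  then have "((\<lambda>E. (1 - e * cos E) * hK e E) has_integral
        integral {0..2*pi} (hK e \<circ> kepler_E e)) {0..2*pi}"
    by (simp add: kepler_inv[OF assms] g0 g2)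
  then have "integral {0..2*pi} (hK e \<circ> kepler_E e) = 0"
    using AK_int[OF assms] has_integral_unique by blast
  moreover have "(hK e \<circ> kepler_E e) integrable_on {0..2*pi}"
    using cont integrable_continuous_interval by blast
  ultimately show ?thesis using integrable_integral by fastforce
qed

lemma Re_integrand:
  assumes "0 \<le> (e::real)" "e < 1" "m = 2 \<or> m = -2"
  shows "Re (complex_of_real (r_over_a e M powi (-3)) * cis (of_int m * true_anom e M)
            * cis (- (of_int 0 * M))) = hK e (kepler_E e M)"
proof -
  define E where "E = kepler_E e M"
  define D where "D = 1 - e * cos E"
  define z where "z = Complex (cos E - e) (sqrt (1 - e\<^sup>2) * sin E)"
  have Dp: "0 < D" unfolding D_def using D_pos[OF assms(1,2)] .
  have e2: "0 \<le> 1 - e\<^sup>2" using assms by (simp add: abs_square_le_1)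
  have "(cmod z)\<^sup>2 = (cos E - e)\<^sup>2 + (1 - e\<^sup>2) * (sin E)\<^sup>2"
    unfolding z_def cmod_power2 using e2 by (simp add: power_mult_distrib)
  also have "\<dots> = D\<^sup>2" unfolding D_def
    using sin_squared_eq[of E] by algebra
  finally have cz: "cmod z = D" using Dp
    by (metis norm_ge_zero power2_eq_imp_eq less_imp_le)
  have z0: "z \<noteq> 0" using cz Dp by auto
  have cA: "cos (Arg z) = (cos E - e) / D"
    using arg_cong[OF cis_Arg[OF z0], of Re] cz by (simp add: z_def sgn_div_norm divide_inverse mult.commute)
  have "cos (of_int m * Arg z) = cos (2 * Arg z)"
    using assms(3) by auto
  also have "\<dots> = 2 * ((cos E - e) / D)\<^sup>2 - 1" by (simp add: cos_double_cos cA)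
  finally have cm: "cos (of_int m * Arg z) = 2 * (cos E - e)\<^sup>2 / D\<^sup>2 - 1"
    by (simp add: power_divide)
  have ta: "true_anom e M = Arg z" unfolding true_anom_def z_def E_def ..
  have ra: "r_over_a e M = D" unfolding r_over_a_def D_def E_def ..
  have "Re (complex_of_real (r_over_a e M powi (-3)) * cis (of_int m * true_anom e M)
            * cis (- (of_int 0 * M))) = D powi (-3) * cos (of_int m * Arg z)"
    by (simp add: ta ra del: of_real_power_int)
  also have "\<dots> = hK e E" unfolding cm hK_def D_def[symmetric]
    by (simp add: power_int_minus field_simps)
  finally show ?thesis unfolding E_def .
qed

lemma hansen_zero:
  assumes "0 \<le> (e::real)" "e < 1" "m = 2 \<or> m = -2"
  shows "hansen (-3) m 0 e = 0"
proof -
  define \<phi> where "\<phi> = (\<lambda>M. complex_of_real (r_over_a e M powi (-3)) * cis (of_int m * true_anom e M)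
            * cis (- (of_int 0 * M)))"
  have Re\<phi>: "(\<lambda>M. Re (\<phi> M)) = hK e \<circ> kepler_E e"
    unfolding \<phi>_def using Re_integrand[OF assms] by (auto simp: fun_eq_iff)
  have "Re (integral {0..2*pi} \<phi>) = 0"
  proof (cases "\<phi> integrable_on {0..2*pi}")
    case True
    then have "((\<lambda>M. Re (\<phi> M)) has_integral Re (integral {0..2*pi} \<phi>)) {0..2*pi}"
      by (intro has_integral_Re integrable_integral)
    then show ?thesis using hKK_int[OF assms(1,2)] Re\<phi> has_integral_unique by metis
  next
    case False
    then show ?thesis by (simp add: not_integrable_integral)
  qed
  then show ?thesis unfolding hansen_def \<phi>_def[symmetric]
    by (simp add: Re_divide)
qed

lemma G_zero: assumes "0 \<le> (e::real)" "e < 1" "q = 0 \<or> q = 2"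
  shows "G_fun 2 q (2 * int q - 2) e = 0"
  using assms(3)
proof
  assume "q = 0" then show ?thesis using hansen_zero[OF assms(1,2), of 2] by (simp add: G_fun_def)
next
  assume "q = 2" then show ?thesis using hansen_zero[OF assms(1,2), of "-2"] by (simp add: G_fun_def)
qed

lemma moon_eq: assumes "0 \<le> ecc k" "ecc k < 1" "q \<in> {0..2}"
  shows "moon_term G mk \<epsilon> x (k\<lparr>arg_per := w\<rparr>) 2 m p s q (2 * int p - 2) (2 * int q - 2)
       = moon_term G mk \<epsilon> x (k\<lparr>arg_per := w'\<rparr>) 2 m p s q (2 * int p - 2) (2 * int q - 2)"
proof -
  have "q = 1 \<or> q = 0 \<or> q = 2" using assms(3) by auto
  then show ?thesis
  proof (elim disjE)
    assume "q = 1" then show ?thesis by (simp add: moon_term_def theta'_bar_def)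
  next
    assume "q = 0" then show ?thesis
      using G_zero[OF assms(1,2), of q] by (simp add: moon_term_def)
  next
    assume "q = 2" then show ?thesis
      using G_zero[OF assms(1,2), of q] by (simp add: moon_term_def)
  qed
qed

lemma sun_eq: assumes "0 \<le> ecc S" "ecc S < 1" "h \<in> {0..2}"
  shows "sun_term G ms x (S\<lparr>arg_per := w\<rparr>) 2 m p h (2 * int p - 2) (2 * int h - 2)
       = sun_term G ms x (S\<lparr>arg_per := w'\<rparr>) 2 m p h (2 * int p - 2) (2 * int h - 2)"
proof -
  have "h = 1 \<or> h = 0 \<or> h = 2" using assms(3) by auto
  then show ?thesis
  proof (elim disjE)
    assume "h = 1" then show ?thesis by (simp add: sun_term_def phi_sun_def)
  next
    assume "h = 0" then show ?thesis
      using G_zero[OF assms(1,2), of h] by (simp add: sun_term_def)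
  next
    assume "h = 2" then show ?thesis
      using G_zero[OF assms(1,2), of h] by (simp add: sun_term_def)
  qed
qed

theorem proposition2:
  fixes G mk ms \<epsilon> w w' :: real and x k S :: elements
  assumes "0 \<le> ecc k" "ecc k < 1"
      and "0 \<le> ecc S" "ecc S < 1"
  shows "R_moon_bar G mk \<epsilon> x (k\<lparr>arg_per := w\<rparr>) = R_moon_bar G mk \<epsilon> x (k\<lparr>arg_per := w'\<rparr>)
       \<and> R_sun_bar G ms x (S\<lparr>arg_per := w\<rparr>) = R_sun_bar G ms x (S\<lparr>arg_per := w'\<rparr>)"
proof
  show "R_moon_bar G mk \<epsilon> x (k\<lparr>arg_per := w\<rparr>) = R_moon_bar G mk \<epsilon> x (k\<lparr>arg_per := w'\<rparr>)"
    unfolding R_moon_bar_def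
    by (intro sum.cong refl moon_eq[OF assms(1,2)])
  show "R_sun_bar G ms x (S\<lparr>arg_per := w\<rparr>) = R_sun_bar G ms x (S\<lparr>arg_per := w'\<rparr>)"
    unfolding R_sun_bar_def
    by (intro sum.cong refl sun_eq[OF assms(3,4)])
qed

end
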